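(* Let $\langle\cdot,\cdot\rangle$ be an invariant symmetric bilinear form on $\mathfrak g$, extended pointwise to $\mathfrak g$-valued functions and 1-forms on $\Sigma$. Let $\omega$ be a meromorphic $\mathfrak g$-valued 1-form on $\Sigma$, holomorphic outside $\Pi\cup\Gamma$, which at every $\gamma\in\Gamma$ has, in a local coordinate $z$ centered at $\gamma$, the expansion $\omega=\left(\frac{h_\gamma}{z}+\omega_0+\omega_1z+\dots\right)dz$ with all $\omega_l\in\mathfrak g_0$ (the degree $0$ subspace of the grading given by $h_\gamma$). Then for all $L,L'\in\mathcal L$ the meromorphic 1-form $\langle L,(d-\mathrm{ad}\,\omega)L'\rangle$ is holomorphic at every point of $\Gamma$ (hence holomorphic outside $\{P_1,\dots,P_N\}\cup\{Q_1,\dots,Q_M\}$).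
   Context: Let $\mathfrak g$ be a complex semisimple Lie algebra with Cartan subalgebra $\mathfrak h$. An element $h\in\mathfrak h$ with $\alpha_i(h)\in\mathbb Z_{\ge0}$ for all simple roots $\alpha_i$ defines a $\mathbb Z$-grading $\mathfrak g=\bigoplus_{p=-k}^k\mathfrak g_p$, $\mathfrak g_p=\{X\in\mathfrak g:(\mathrm{ad}\,h)X=pX\}$, $k=\max\{p:\mathfrak g_p\neq0\}$, and a filtration $\tilde{\mathfrak g}_p=\bigoplus_{q=-k}^{p}\mathfrak g_q$. Let $\Sigma$ be a compact Riemann surface of genus $g$ with disjoint finite sets $\Pi=\{P_1,\dots,P_N\}\cup\{Q_1,\dots,Q_M\}$ and $\Gamma$. For each $\gamma\in\Gamma$ fix such a grading element $h_\gamma$ (all of depth $k$). $\mathcal L$ is the space of meromorphic maps $L:\Sigma\to\mathfrak g$, holomorphic outside $\Pi\cup\Gamma$, such that at each $\gamma\in\Gamma$, in a local coordinate $z$ centered at $\gamma$, $L(z)=\sum_{p\ge -k}L_pz^p$ with $L_p\in\tilde{\mathfrak g}_p$ (for the grading given by $h_\gamma$). Here $(\mathrm{ad}\,\omega)L'$ denotes the 1-form $[\omega,L']$. *)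

theory Defs
  imports "HOL-Analysis.Analysis"
begin

text \<open>The complex Lie algebra g is modelled as the finite-dimensional complex vector space
  complex^'n with a bracket br.  Subspaces, spans etc. are taken over the complex numbers
  (locale interpretation vec of Cartesian_Space).\<close>

definition cbilinear :: "(complex^'n \<Rightarrow> complex^'n \<Rightarrow> complex) \<Rightarrow> bool" where
  "cbilinear f \<longleftrightarrow>
     (\<forall>y. Vector_Spaces.linear (*s) (*) (\<lambda>x. f x y)) \<and>
     (\<forall>x. Vector_Spaces.linear (*s) (*) (\<lambda>y. f x y))"

definition lie_algebra :: "(complex^'n \<Rightarrow> complex^'n \<Rightarrow> complex^'n) \<Rightarrow> bool" where
  "lie_algebra br \<longleftrightarrow>
     (\<forall>y. Vector_Spaces.linear (*s) (*s) (\<lambda>x. br x y)) \<and>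
     (\<forall>x. Vector_Spaces.linear (*s) (*s) (\<lambda>y. br x y)) \<and>
     (\<forall>x. br x x = 0) \<and>
     (\<forall>x y z. br x (br y z) + br y (br z x) + br z (br x y) = 0)"

definition lie_ideal :: "(complex^'n \<Rightarrow> complex^'n \<Rightarrow> complex^'n) \<Rightarrow> (complex^'n) set \<Rightarrow> bool" where
  "lie_ideal br I \<longleftrightarrow> vec.subspace I \<and> (\<forall>x\<in>I. \<forall>y. br y x \<in> I)"

fun derived_series :: "(complex^'n \<Rightarrow> complex^'n \<Rightarrow> complex^'n) \<Rightarrow> (complex^'n) set \<Rightarrow> nat \<Rightarrow> (complex^'n) set" where
  "derived_series br I 0 = I"
| "derived_series br I (Suc m) =
     vec.span {br x y | x y. x \<in> derived_series br I m \<and> y \<in> derived_series br I m}"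

definition lie_solvable :: "(complex^'n \<Rightarrow> complex^'n \<Rightarrow> complex^'n) \<Rightarrow> (complex^'n) set \<Rightarrow> bool" where
  "lie_solvable br I \<longleftrightarrow> (\<exists>m. derived_series br I m = {0})"

text \<open>Semisimple: a Lie algebra whose only solvable ideal is 0 (radical is zero).\<close>
definition semisimple_lie :: "(complex^'n \<Rightarrow> complex^'n \<Rightarrow> complex^'n) \<Rightarrow> bool" where
  "semisimple_lie br \<longleftrightarrow> lie_algebra br \<and>
     (\<forall>I. lie_ideal br I \<and> lie_solvable br I \<longrightarrow> I = {0})"

definition ad_semisimple :: "(complex^'n \<Rightarrow> complex^'n \<Rightarrow> complex^'n) \<Rightarrow> complex^'n \<Rightarrow> bool" where
  "ad_semisimple br x \<longleftrightarrow> vec.span {v. \<exists>c. br x v = c *s v} = UNIV"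

definition toral_subalgebra :: "(complex^'n \<Rightarrow> complex^'n \<Rightarrow> complex^'n) \<Rightarrow> (complex^'n) set \<Rightarrow> bool" where
  "toral_subalgebra br T \<longleftrightarrow> vec.subspace T \<and> (\<forall>x\<in>T. \<forall>y\<in>T. br x y \<in> T) \<and>
     (\<forall>x\<in>T. ad_semisimple br x)"

text \<open>Cartan subalgebra of a semisimple Lie algebra: a maximal toral subalgebra.\<close>
definition cartan_subalgebra :: "(complex^'n \<Rightarrow> complex^'n \<Rightarrow> complex^'n) \<Rightarrow> (complex^'n) set \<Rightarrow> bool" where
  "cartan_subalgebra br H \<longleftrightarrow> toral_subalgebra br H \<and>
     (\<forall>T. toral_subalgebra br T \<and> H \<subseteq> T \<longrightarrow> T = H)"

text \<open>Roots relative to H: nonzero functionals on H (represented as functions vanishing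
  off H) with a nonzero simultaneous eigenvector.\<close>
definition lie_root :: "(complex^'n \<Rightarrow> complex^'n \<Rightarrow> complex^'n) \<Rightarrow> (complex^'n) set \<Rightarrow> (complex^'n \<Rightarrow> complex) \<Rightarrow> bool" where
  "lie_root br H \<alpha> \<longleftrightarrow> (\<forall>x. x \<notin> H \<longrightarrow> \<alpha> x = 0) \<and> (\<exists>y\<in>H. \<alpha> y \<noteq> 0) \<and>
     (\<exists>x. x \<noteq> 0 \<and> (\<forall>y\<in>H. br y x = \<alpha> y *s x))"

text \<open>A base (set of simple roots).\<close>
definition root_base :: "(complex^'n \<Rightarrow> complex^'n \<Rightarrow> complex^'n) \<Rightarrow> (complex^'n) set \<Rightarrow> (complex^'n \<Rightarrow> complex) set \<Rightarrow> bool" where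
  "root_base br H \<Delta> \<longleftrightarrow> finite \<Delta> \<and> (\<forall>\<alpha>\<in>\<Delta>. lie_root br H \<alpha>) \<and>
     (\<forall>c. (\<forall>y\<in>H. (\<Sum>\<alpha>\<in>\<Delta>. c \<alpha> * \<alpha> y) = 0) \<longrightarrow> (\<forall>\<alpha>\<in>\<Delta>. c \<alpha> = 0)) \<and>
     (\<forall>\<beta>. lie_root br H \<beta> \<longrightarrow> (\<exists>m :: _ \<Rightarrow> int. (\<forall>y\<in>H. \<beta> y = (\<Sum>\<alpha>\<in>\<Delta>. of_int (m \<alpha>) * \<alpha> y)) \<and>
        ((\<forall>\<alpha>\<in>\<Delta>. m \<alpha> \<ge> 0) \<or> (\<forall>\<alpha>\<in>\<Delta>. m \<alpha> \<le> 0))))"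

text \<open>Grading element: h in a Cartan subalgebra H with alpha_i(h) in Z_{>=0} for the simple roots
  of some base.\<close>
definition grading_element :: "(complex^'n \<Rightarrow> complex^'n \<Rightarrow> complex^'n) \<Rightarrow> (complex^'n) set \<Rightarrow> complex^'n \<Rightarrow> bool" where
  "grading_element br H h \<longleftrightarrow> cartan_subalgebra br H \<and> h \<in> H \<and>
     (\<exists>\<Delta>. root_base br H \<Delta> \<and> (\<forall>\<alpha>\<in>\<Delta>. \<exists>m::nat. \<alpha> h = of_nat m))"

text \<open>g_p = eigenspace of ad h with eigenvalue p.\<close>
definition grade :: "(complex^'n \<Rightarrow> complex^'n \<Rightarrow> complex^'n) \<Rightarrow> complex^'n \<Rightarrow> int \<Rightarrow> (complex^'n) set" where
  "grade br h p = {x. br h x = of_int p *s x}"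

definition grading_depth :: "(complex^'n \<Rightarrow> complex^'n \<Rightarrow> complex^'n) \<Rightarrow> complex^'n \<Rightarrow> int" where
  "grading_depth br h = Max {p. grade br h p \<noteq> {0}}"

text \<open>Filtration: tilde g_p = g_{-k} + ... + g_p.\<close>
definition filtration :: "(complex^'n \<Rightarrow> complex^'n \<Rightarrow> complex^'n) \<Rightarrow> complex^'n \<Rightarrow> int \<Rightarrow> (complex^'n) set" where
  "filtration br h p = vec.span (\<Union>q\<in>{- grading_depth br h..p}. grade br h q)"

definition invariant_form :: "(complex^'n \<Rightarrow> complex^'n \<Rightarrow> complex^'n) \<Rightarrow> (complex^'n \<Rightarrow> complex^'n \<Rightarrow> complex) \<Rightarrow> bool" where
  "invariant_form br B \<longleftrightarrow> cbilinear B \<and> (\<forall>x y. B x y = B y x) \<and>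
     (\<forall>x y z. B (br x y) z = B x (br y z))"

text \<open>Componentwise complex derivative of a g-valued function.\<close>
definition vderiv :: "(complex \<Rightarrow> complex^'n) \<Rightarrow> complex \<Rightarrow> complex^'n" where
  "vderiv f z = (\<chi> i. deriv (\<lambda>u. f u $ i) z)"

end

theory Submission
  imports Defs "HOL-Complex_Analysis.Cauchy_Integral_Formula"
begin



lemma scaleR_vec_c: "(c::real) *\<^sub>R (x::complex^'n) = complex_of_real c *s x"
  by (simp add: vec_eq_iff scaleR_conv_of_real[where 'a=complex])

lemma vlin_bounded:
  fixes f :: "complex^'n \<Rightarrow> complex^'m"
  assumes "Vector_Spaces.linear (*s) (*s) f"
  shows "bounded_linear f"
proof -
  have "linear f" using assms unfolding Vector_Spaces.linear_iff Real_Vector_Spaces.linear_iff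
    by (auto simp: scaleR_vec_c)
  thus ?thesis by (simp add: linear_conv_bounded_linear)
qed

lemma clin_bounded:
  fixes f :: "complex^'n \<Rightarrow> complex"
  assumes "Vector_Spaces.linear (*s) (*) f"
  shows "bounded_linear f"
proof -
  have "linear f" using assms unfolding Vector_Spaces.linear_iff Real_Vector_Spaces.linear_iff
    by (auto simp: scaleR_vec_c scaleR_conv_of_real)
  thus ?thesis by (simp add: linear_conv_bounded_linear)
qed

lemma vlin_add: "Vector_Spaces.linear s1 s2 T \<Longrightarrow> T (x + y) = T x + T y"
  unfolding Vector_Spaces.linear_iff by blast
lemma vlin_scale: "Vector_Spaces.linear s1 s2 T \<Longrightarrow> T (s1 c x) = s2 c (T x)"
  unfolding Vector_Spaces.linear_iff by blast
lemma vlin_zero: "Vector_Spaces.linear s1 s2 T \<Longrightarrow> T 0 = 0"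
  by (metis Vector_Spaces.linear_iff_module_hom module_hom.zero)
lemma vlin_sum: "Vector_Spaces.linear s1 s2 T \<Longrightarrow> T (sum g A) = (\<Sum>a\<in>A. T (g a))"
  by (metis Vector_Spaces.linear_iff_module_hom module_hom.sum)
lemma vlin_diff: "Vector_Spaces.linear s1 s2 T \<Longrightarrow> T (x - y) = T x - T y"
  by (metis Vector_Spaces.linear_iff_module_hom module_hom.diff)
lemma vlin_expand:
  fixes T :: "complex^'n \<Rightarrow> complex^'m"
  assumes "Vector_Spaces.linear (*s) (*s) T"
  shows "T x $ i = (\<Sum>j\<in>UNIV. x $ j * T (axis j 1) $ i)"
proof -
  have "T x = T (\<Sum>j\<in>UNIV. x$j *s axis j 1)" by (simp add: basis_expansion)
  also have "\<dots> = (\<Sum>j\<in>UNIV. x$j *s T (axis j 1))"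
    using assms by (simp add: vlin_sum vlin_scale)
  finally show ?thesis by (simp add: sum_component)
qed

lemma clin_expand:
  fixes T :: "complex^'n \<Rightarrow> complex"
  assumes "Vector_Spaces.linear (*s) (*) T"
  shows "T x = (\<Sum>j\<in>UNIV. x $ j * T (axis j 1))"
proof -
  have "T x = T (\<Sum>j\<in>UNIV. x$j *s axis j 1)" by (simp add: basis_expansion)
  also have "\<dots> = (\<Sum>j\<in>UNIV. x$j * T (axis j 1))"
    using assms by (simp add: vlin_sum vlin_scale)
  finally show ?thesis .
qed

definition vhol :: "(complex \<Rightarrow> complex^'n) \<Rightarrow> complex set \<Rightarrow> bool" where
  "vhol f S \<longleftrightarrow> (\<forall>i. (\<lambda>z. f z $ i) holomorphic_on S)"

lemma vhol_lin:
  assumes "Vector_Spaces.linear (*s) (*s) T" "vhol f S"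
  shows "vhol (\<lambda>z. T (f z)) S"
  using assms unfolding vhol_def
  by (subst vlin_expand[OF assms(1)]) (auto intro!: holomorphic_intros)

lemma hol_clin:
  assumes "Vector_Spaces.linear (*s) (*) T" "vhol f S"
  shows "(\<lambda>z. T (f z)) holomorphic_on S"
  using assms unfolding vhol_def
  by (subst clin_expand[OF assms(1)]) (auto intro!: holomorphic_intros)

lemma cbilinear_expand:
  assumes "cbilinear B"
  shows "B x y = (\<Sum>i\<in>UNIV. \<Sum>j\<in>UNIV. x $ i * y $ j * B (axis i 1) (axis j 1))"
proof -
  have l1: "Vector_Spaces.linear (*s) (*) (\<lambda>x. B x y)" for y using assms by (simp add: cbilinear_def)
  have l2: "Vector_Spaces.linear (*s) (*) (\<lambda>y. B x y)" for x using assms by (simp add: cbilinear_def)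
  have e1: "B x y = (\<Sum>i\<in>UNIV. x $ i * B (axis i 1) y)" by (rule clin_expand[OF l1])
  have e2: "B u y = (\<Sum>j\<in>UNIV. y $ j * B u (axis j 1))" for u by (rule clin_expand[OF l2])
  have "B x y = (\<Sum>i\<in>UNIV. x $ i * B (axis i 1) y)" by (rule e1)
  also have "\<dots> = (\<Sum>i\<in>UNIV. x $ i * (\<Sum>j\<in>UNIV. y $ j * B (axis i 1) (axis j 1)))"
    by (rule sum.cong[OF refl], subst e2, rule refl)
  finally show ?thesis by (simp add: sum_distrib_left mult.assoc)
qed

lemma hol_cbilinear:
  assumes "cbilinear B" "vhol f S" "vhol g S"
  shows "(\<lambda>z. B (f z) (g z)) holomorphic_on S"
  using assms unfolding vhol_def
  by (subst cbilinear_expand[OF assms(1)]) (auto intro!: holomorphic_intros)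

lemma bil_expand:
  fixes br :: "complex^'n \<Rightarrow> complex^'n \<Rightarrow> complex^'n"
  assumes "\<forall>y. Vector_Spaces.linear (*s) (*s) (\<lambda>x. br x y)" "\<forall>x. Vector_Spaces.linear (*s) (*s) (\<lambda>y. br x y)"
  shows "br x y $ k = (\<Sum>i\<in>UNIV. \<Sum>j\<in>UNIV. x $ i * y $ j * br (axis i 1) (axis j 1) $ k)"
proof -
  have e1: "br x y $ k = (\<Sum>i\<in>UNIV. x $ i * br (axis i 1) y $ k)" by (rule vlin_expand[OF assms(1)[rule_format]])
  have e2: "br u y $ k = (\<Sum>j\<in>UNIV. y $ j * br u (axis j 1) $ k)" for u by (rule vlin_expand[OF assms(2)[rule_format]])
  have "br x y $ k = (\<Sum>i\<in>UNIV. x $ i * br (axis i 1) y $ k)" by (rule e1)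
  also have "\<dots> = (\<Sum>i\<in>UNIV. x $ i * (\<Sum>j\<in>UNIV. y $ j * br (axis i 1) (axis j 1) $ k))"
    by (rule sum.cong[OF refl], subst e2, rule refl)
  finally show ?thesis by (simp add: sum_distrib_left mult.assoc)
qed

lemma vhol_bil:
  fixes br :: "complex^'n \<Rightarrow> complex^'n \<Rightarrow> complex^'n"
  assumes "\<forall>y. Vector_Spaces.linear (*s) (*s) (\<lambda>x. br x y)" "\<forall>x. Vector_Spaces.linear (*s) (*s) (\<lambda>y. br x y)"
    "vhol f S" "vhol g S"
  shows "vhol (\<lambda>z. br (f z) (g z)) S"
  using assms(3,4) unfolding vhol_def
  by (subst bil_expand[OF assms(1,2)]) (auto intro!: holomorphic_intros)

lemma vhol_add: "vhol f S \<Longrightarrow> vhol g S \<Longrightarrow> vhol (\<lambda>z. f z + g z) S"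
  unfolding vhol_def by (auto intro!: holomorphic_intros)
lemma vhol_diff: "vhol f S \<Longrightarrow> vhol g S \<Longrightarrow> vhol (\<lambda>z. f z - g z) S"
  unfolding vhol_def by (auto intro!: holomorphic_intros)
lemma vhol_scale: "c holomorphic_on S \<Longrightarrow> vhol g S \<Longrightarrow> vhol (\<lambda>z. c z *s g z) S"
  unfolding vhol_def by (auto intro!: holomorphic_intros)
lemma vhol_vderiv: "open S \<Longrightarrow> vhol f S \<Longrightarrow> vhol (vderiv f) S"
  unfolding vhol_def vderiv_def by (auto intro!: holomorphic_intros)

lemma vhol_deriv_at:
  assumes "vhol f S" "open S" "z \<in> S"
  shows "((\<lambda>u. f u $ i) has_field_derivative vderiv f z $ i) (at z)"
proof -
  have "(\<lambda>u. f u $ i) holomorphic_on S" using assms unfolding vhol_def by auto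
  then have "(\<lambda>u. f u $ i) field_differentiable (at z)"
    using assms holomorphic_on_imp_differentiable_at by blast
  then show ?thesis by (simp add: vderiv_def DERIV_deriv_iff_field_differentiable)
qed

lemma vderiv_lin:
  assumes "Vector_Spaces.linear (*s) (*s) T" "vhol f S" "open S" "z \<in> S"
  shows "vderiv (\<lambda>u. T (f u)) z = T (vderiv f z)"
proof (subst vec_eq_iff, intro allI)
  fix i
  have "((\<lambda>u. \<Sum>j\<in>UNIV. f u $ j * T (axis j 1) $ i) has_field_derivative
          (\<Sum>j\<in>UNIV. vderiv f z $ j * T (axis j 1) $ i)) (at z)"
    by (intro DERIV_sum DERIV_cmult_right vhol_deriv_at[OF assms(2-4)])
  then have "deriv (\<lambda>u. T (f u) $ i) z = (\<Sum>j\<in>UNIV. vderiv f z $ j * T (axis j 1) $ i)"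
    by (subst vlin_expand[OF assms(1)]) (rule DERIV_imp_deriv)
  also have "\<dots> = T (vderiv f z) $ i" by (rule vlin_expand[OF assms(1), symmetric])
  finally show "vderiv (\<lambda>u. T (f u)) z $ i = T (vderiv f z) $ i"
    by (simp add: vderiv_def)
qed

lemma vderiv_cong:
  assumes "open S" "z \<in> S" "\<And>u. u \<in> S \<Longrightarrow> f u = g u"
  shows "vderiv f z = vderiv g z"
proof -
  have ev: "eventually (\<lambda>u. f u = g u) (nhds z)"
    unfolding eventually_nhds using assms by blast
  have "deriv (\<lambda>u. f u $ i) z = deriv (\<lambda>u. g u $ i) z" for i
    by (rule deriv_cong_ev[OF eventually_mono[OF ev] refl]) simp
  then show ?thesis unfolding vderiv_def by (simp add: vec_eq_iff)
qed

lemma vderiv_scale: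
  assumes "vhol f S" "open S" "z \<in> S" "(c has_field_derivative c') (at z)"
  shows "vderiv (\<lambda>u. c u *s f u) z = c' *s f z + c z *s vderiv f z"
proof (subst vec_eq_iff, intro allI)
  fix i
  have "((\<lambda>u. c u * f u $ i) has_field_derivative (c' * f z $ i + c z * vderiv f z $ i)) (at z)"
    using DERIV_mult[OF assms(4) vhol_deriv_at[OF assms(1-3)]] by (simp add: mult.commute)
  then show "vderiv (\<lambda>u. c u *s f u) z $ i = (c' *s f z + c z *s vderiv f z) $ i"
    by (simp add: vderiv_def DERIV_imp_deriv)
qed

lemma vderiv_sum:
  assumes "\<And>t. t \<in> A \<Longrightarrow> vhol (f t) S" "open S" "z \<in> S"
  shows "vderiv (\<lambda>u. \<Sum>t\<in>A. f t u) z = (\<Sum>t\<in>A. vderiv (f t) z)"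
proof (subst vec_eq_iff, intro allI)
  fix i
  have "((\<lambda>u. \<Sum>t\<in>A. f t u $ i) has_field_derivative (\<Sum>t\<in>A. vderiv (f t) z $ i)) (at z)"
    by (intro DERIV_sum vhol_deriv_at[OF assms(1) assms(2,3)])
  then show "vderiv (\<lambda>u. \<Sum>t\<in>A. f t u) z $ i = (\<Sum>t\<in>A. vderiv (f t) z) $ i"
    by (simp add: vderiv_def DERIV_imp_deriv sum_component)
qed

lemma powser_vhol:
  fixes c :: "nat \<Rightarrow> complex^'n"
  assumes "\<forall>z. 0 < norm z \<and> norm z < r \<longrightarrow> (\<lambda>n. (z ^ n) *s c n) sums g z"
  shows "\<exists>G. vhol G (ball 0 r) \<and> (\<forall>z. 0 < norm z \<and> norm z < r \<longrightarrow> G z = g z)"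
proof -
  have cs: "(\<lambda>n. c n $ i * z ^ n) sums (g z $ i)" if "0 < norm z" "norm z < r" for z i
    using bounded_linear.sums[OF bounded_linear_vec_nth[of i], OF assms[rule_format, OF conjI[OF that]]]
    by (simp add: mult.commute)
  have sm: "summable (\<lambda>n. c n $ i * z ^ n)" if "norm z < r" for z i
  proof (cases "z = 0")
    case True then show ?thesis by simp
  next
    case False then show ?thesis using cs[of z i] that by (auto simp: sums_iff)
  qed
  define G where "G z = (\<chi> i. \<Sum>n. c n $ i * z ^ n)" for z
  have "vhol G (ball 0 r)"
    unfolding vhol_def
  proof (intro allI)
    fix i
    show "(\<lambda>z. G z $ i) holomorphic_on ball 0 r"
      unfolding G_def
      by (subst holomorphic_on_open) (auto intro!: exI termdiffs_strong'[of r] sm)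
  qed
  moreover have "G z = g z" if "0 < norm z" "norm z < r" for z
    unfolding G_def using cs[OF that] by (simp add: vec_eq_iff sums_iff)
  ultimately show ?thesis by blast
qed




lemma lie_lin1: "lie_algebra br \<Longrightarrow> Vector_Spaces.linear (*s) (*s) (\<lambda>x. br x y)"
  by (simp add: lie_algebra_def)
lemma lie_lin2: "lie_algebra br \<Longrightarrow> Vector_Spaces.linear (*s) (*s) (\<lambda>y. br x y)"
  by (simp add: lie_algebra_def)

lemma vlin_neg: "Vector_Spaces.linear s1 s2 T \<Longrightarrow> T (- x) = - T x"
  by (metis Vector_Spaces.linear_iff_module_hom module_hom.neg)

lemma lie_antisym:
  assumes "lie_algebra br" shows "br x y = - br y x"
proof -
  have "br (x + y) (x + y) = 0" using assms by (simp add: lie_algebra_def)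
  then have "br x x + br x y + (br y x + br y y) = 0"
    using vlin_add[OF lie_lin1[OF assms]] vlin_add[OF lie_lin2[OF assms]] by (metis add.assoc)
  then show ?thesis using assms by (simp add: lie_algebra_def add_eq_0_iff)
qed

lemma grade_add: assumes "x \<in> grade br h t" "y \<in> grade br h t" "lie_algebra br" shows "x + y \<in> grade br h t"
proof -
  have "br h (x + y) = br h x + br h y" by (rule vlin_add[OF lie_lin2[OF assms(3)]])
  then show ?thesis using assms by (simp add: grade_def vector_add_ldistrib)
qed
lemma grade_scale: assumes "x \<in> grade br h t" "lie_algebra br" shows "c *s x \<in> grade br h t"
proof -
  have "br h (c *s x) = c *s br h x" by (rule vlin_scale[OF lie_lin2[OF assms(2)]])
  then show ?thesis using assms by (simp add: grade_def vector_smult_assoc mult.commute)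
qed
lemma grade_zero: assumes "lie_algebra br" shows "0 \<in> grade br h t"
proof -
  have "br h 0 = 0" by (rule vlin_zero[OF lie_lin2[OF assms]])
  then show ?thesis by (simp add: grade_def)
qed
lemma grade_sum: "lie_algebra br \<Longrightarrow> (\<And>a. a \<in> A \<Longrightarrow> f a \<in> grade br h t) \<Longrightarrow> sum f A \<in> grade br h t"
  by (induction A rule: infinite_finite_induct) (auto intro: grade_add grade_zero)

lemma grade_orth:
  assumes "lie_algebra br" "invariant_form br B" "x \<in> grade br h s" "y \<in> grade br h t" "s + t \<noteq> 0"
  shows "B x y = 0"
proof -
  have cb: "cbilinear B" using assms(2) by (simp add: invariant_form_def)
  have l1: "Vector_Spaces.linear (*s) (*) (\<lambda>x. B x y)" for y using cb by (simp add: cbilinear_def)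
  have l2: "Vector_Spaces.linear (*s) (*) (\<lambda>y. B x y)" for x using cb by (simp add: cbilinear_def)
  have inv: "B (br u v) w = B u (br v w)" for u v w using assms(2) unfolding invariant_form_def by blast
  have "of_int t * B x y = B x (of_int t *s y)" by (rule vlin_scale[OF l2[of x], symmetric])
  also have "\<dots> = B x (br h y)" using assms(4) by (simp add: grade_def)
  also have "\<dots> = B (br x h) y" by (rule inv[symmetric])
  also have "\<dots> = B (- br h x) y" using lie_antisym[OF assms(1), of x h] by (rule arg_cong)
  also have "\<dots> = - B (br h x) y" by (rule vlin_neg[OF l1[of y]])
  also have "\<dots> = - B (of_int s *s x) y" using assms(3) by (simp add: grade_def)
  also have "\<dots> = - (of_int s * B x y)" by (simp only: vlin_scale[OF l1[of y]])
  finally have "of_int (s + t) * B x y = 0" by (simp add: algebra_simps)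
  then show ?thesis using assms(5) by (metis mult_eq_0_iff of_int_eq_0_iff)
qed

lemma grade_br0:
  assumes "lie_algebra br" "x \<in> grade br h 0" "y \<in> grade br h t"
  shows "br x y \<in> grade br h t"
proof -
  have J: "br h (br x y) + br x (br y h) + br y (br h x) = 0" using assms(1) by (simp add: lie_algebra_def)
  have hx: "br h x = 0" using assms(2) by (simp add: grade_def)
  have a1: "br y (br h x) = 0" using hx vlin_zero[OF lie_lin2[OF assms(1)]] by simp
  have a2: "br y h = - (of_int t *s y)"
  proof -
    have "br y h = - br h y" by (rule lie_antisym[OF assms(1)])
    then show ?thesis using assms(3) by (simp add: grade_def)
  qed
  have a3: "br x (- (of_int t *s y)) = - (of_int t *s br x y)"
  proof -
    have "br x (- (of_int t *s y)) = - br x (of_int t *s y)" by (rule vlin_neg[OF lie_lin2[OF assms(1)]])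
    also have "br x (of_int t *s y) = of_int t *s br x y" by (rule vlin_scale[OF lie_lin2[OF assms(1)]])
    finally show ?thesis .
  qed
  have "br h (br x y) + - (of_int t *s br x y) = 0" using J unfolding a1 a2 a3 by simp
  then have "br h (br x y) = of_int t *s br x y" by (simp add: add_eq_0_iff)
  then show ?thesis by (simp add: grade_def)
qed

lemma sums_grade:
  assumes "lie_algebra br" "(\<lambda>n. c n *s x n) sums S" "\<And>n. x n \<in> grade br h t"
  shows "S \<in> grade br h t"
proof -
  have bl: "bounded_linear (br h)" using vlin_bounded[OF lie_lin2[OF assms(1)]] by simp
  have "(\<lambda>n. br h (c n *s x n)) sums br h S" using bounded_linear.sums[OF bl assms(2)] .
  moreover have "br h (c n *s x n) = of_int t *s (c n *s x n)" for n
    using vlin_scale[OF lie_lin2[OF assms(1)], of h "c n" "x n"] assms(3)[of n]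
    by (simp add: grade_def vector_smult_assoc mult.commute)
  ultimately have "(\<lambda>n. of_int t *s (c n *s x n)) sums br h S" by simp
  moreover have "(\<lambda>n. of_int t *s (c n *s x n)) sums (of_int t *s S)"
    using bounded_linear.sums[OF vlin_bounded[of "\<lambda>v. of_int t *s v"] assms(2)]
    by (simp add: Vector_Spaces.linear_iff vec.vector_space_axioms vector_add_ldistrib vector_smult_assoc mult.commute)
  ultimately show ?thesis by (simp add: grade_def sums_unique2)
qed




lemma norm_smult_vec: "norm (c *s (x::complex^'n)) = cmod c * norm x"
  unfolding norm_vec_def by (simp add: L2_set_right_distrib norm_mult)

lemma eig_bound:
  assumes "lie_algebra br"
  obtains K :: int where "K \<ge> 0" "\<And>t x. x \<in> grade br h t \<Longrightarrow> x \<noteq> 0 \<Longrightarrow> \<bar>t\<bar> \<le> K"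
proof -
  have bl: "bounded_linear (br h)" using vlin_bounded[OF lie_lin2[OF assms]] by simp
  obtain C where C: "\<And>x. norm (br h x) \<le> norm x * C" using bounded_linear.bounded[OF bl] by blast
  define K where "K = max 0 (ceiling C)"
  have "\<bar>t\<bar> \<le> K" if "x \<in> grade br h t" "x \<noteq> 0" for t x
  proof -
    have "norm (br h x) = \<bar>real_of_int t\<bar> * norm x" using that(1) by (simp add: grade_def norm_smult_vec)
    then have "\<bar>real_of_int t\<bar> * norm x \<le> C * norm x" using C[of x] by (simp add: mult.commute)
    then have "\<bar>real_of_int t\<bar> \<le> C" using that(2) by simp
    then show ?thesis unfolding K_def by linarith
  qed
  moreover have "K \<ge> 0" unfolding K_def by simp
  ultimately show ?thesis using that by blast
qed

fun prj :: "(complex^'n \<Rightarrow> complex^'n) \<Rightarrow> int \<Rightarrow> int list \<Rightarrow> complex^'n \<Rightarrow> complex^'n" where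
  "prj D s [] v = v"
| "prj D s (q # qs) v = (1 / (of_int s - of_int q)) *s (D (prj D s qs v) - of_int q *s prj D s qs v)"

lemma prj_lin:
  assumes "Vector_Spaces.linear (*s) (*s) D"
  shows "Vector_Spaces.linear (*s) (*s) (prj D s qs)"
proof (induction qs)
  case Nil
  then show ?case by (simp add: Vector_Spaces.linear_iff vec.vector_space_axioms)
next
  case (Cons q qs)
  have a: "prj D s qs (x + y) = prj D s qs x + prj D s qs y" for x y using vlin_add[OF Cons] .
  have b: "prj D s qs (c *s x) = c *s prj D s qs x" for c x using vlin_scale[OF Cons] .
  have c: "D (x + y) = D x + D y" for x y using vlin_add[OF assms] .
  have d: "D (c *s x) = c *s D x" for c x using vlin_scale[OF assms] .
  show ?case unfolding Vector_Spaces.linear_iff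
    by (simp add: vec.vector_space_axioms a b c d vec_eq_iff algebra_simps)
qed

lemma prod_list_one: "(\<And>x. x \<in> set xs \<Longrightarrow> f x = 1) \<Longrightarrow> prod_list (map f xs) = 1"
  by (induction xs) auto
lemma prod_list_zero: "x \<in> set xs \<Longrightarrow> f x = 0 \<Longrightarrow> prod_list (map f xs) = (0::complex)"
  by (induction xs) auto

lemma prj_eig:
  assumes "Vector_Spaces.linear (*s) (*s) D" "D v = of_int t *s v"
  shows "prj D s qs v = (\<Prod>q\<leftarrow>qs. (of_int t - of_int q) / (of_int s - of_int q)) *s v"
proof (induction qs)
  case Nil
  then show ?case by simp
next
  case (Cons q qs)
  have d: "D (c *s x) = c *s D x" for c x using vlin_scale[OF assms(1)] .
  show ?case
    by (simp only: prj.simps Cons.IH d assms(2)) (simp add: vec_eq_iff divide_inverse algebra_simps)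
qed

definition pri :: "(complex^'n \<Rightarrow> complex^'n) \<Rightarrow> int \<Rightarrow> int \<Rightarrow> complex^'n \<Rightarrow> complex^'n" where
  "pri D K s = prj D s (filter (\<lambda>q. q \<noteq> s) [-K..K])"

lemma pri_lin: "Vector_Spaces.linear (*s) (*s) D \<Longrightarrow> Vector_Spaces.linear (*s) (*s) (pri D K s)"
  unfolding pri_def by (rule prj_lin)

lemma pri_eig:
  assumes "Vector_Spaces.linear (*s) (*s) D" "D v = of_int t *s v" "v \<noteq> 0 \<Longrightarrow> \<bar>t\<bar> \<le> K"
  shows "pri D K s v = (if t = s then v else 0)"
proof (cases "v = 0")
  case True
  then show ?thesis using vlin_zero[OF pri_lin[OF assms(1)]] by simp
next
  case False
  have e: "pri D K s v = (\<Prod>q\<leftarrow>filter (\<lambda>q. q \<noteq> s) [-K..K]. (of_int t - of_int q) / (of_int s - of_int q)) *s v"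
    unfolding pri_def by (rule prj_eig[OF assms(1,2)])
  show ?thesis
  proof (cases "t = s")
    case True
    have "(\<Prod>q\<leftarrow>filter (\<lambda>q. q \<noteq> s) [-K..K]. (of_int t - of_int q) / (of_int s - of_int q)) = (1::complex)"
      by (rule prod_list_one) (use True in auto)
    then show ?thesis using e True by simp
  next
    case ne: False
    have "t \<in> set (filter (\<lambda>q. q \<noteq> s) [-K..K])" using assms(3) False ne by auto
    then have "(\<Prod>q\<leftarrow>filter (\<lambda>q. q \<noteq> s) [-K..K]. (of_int t - of_int q) / (of_int s - of_int q)) = (0::complex)"
      by (rule prod_list_zero) simp
    then show ?thesis using e ne by simp
  qed
qed

lemma pri_gen:
  assumes "lie_algebra br" "\<And>t x. x \<in> grade br h t \<Longrightarrow> x \<noteq> 0 \<Longrightarrow> \<bar>t\<bar> \<le> K" "x \<in> grade br h q"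
  shows "pri (br h) K s x = (if q = s then x else 0)"
  by (rule pri_eig[OF lie_lin2[OF assms(1)]]) (use assms in \<open>auto simp: grade_def\<close>)

lemma pri_span:
  assumes "lie_algebra br" "\<And>t x. x \<in> grade br h t \<Longrightarrow> x \<noteq> 0 \<Longrightarrow> \<bar>t\<bar> \<le> K"
    "v \<in> vec.span (\<Union>q\<in>A. grade br h q)"
  shows "pri (br h) K s v \<in> grade br h s \<and> (\<Sum>s\<in>{-K..K}. pri (br h) K s v) = v \<and>
         ((\<forall>q\<in>A. q \<noteq> s) \<longrightarrow> pri (br h) K s v = 0)"
  using assms(3)
proof (induction rule: vec.span_induct_alt)
  case base
  have z: "pri (br h) K s 0 = 0" for s using vlin_zero[OF pri_lin[OF lie_lin2[OF assms(1)]]] .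
  show ?case by (simp add: z grade_zero[OF assms(1)])
next
  case (step c x y)
  have lin: "Vector_Spaces.linear (*s) (*s) (pri (br h) K s)" for s by (rule pri_lin[OF lie_lin2[OF assms(1)]])
  have e: "pri (br h) K s (c *s x + y) = c *s pri (br h) K s x + pri (br h) K s y" for s
    using vlin_add[OF lin] vlin_scale[OF lin] by metis
  obtain q where q: "q \<in> A" "x \<in> grade br h q" using step.hyps by blast
  have g: "pri (br h) K s x = (if q = s then x else 0)" for s by (rule pri_gen[OF assms(1,2) q(2)])
  have sx: "(\<Sum>s\<in>{-K..K}. pri (br h) K s x) = x"
  proof (cases "x = 0")
    case True then show ?thesis using g by simp
  next
    case False
    then have "q \<in> {-K..K}" using assms(2)[OF q(2)] by auto
    then show ?thesis by (simp add: g)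
  qed
  have a: "pri (br h) K s (c *s x + y) \<in> grade br h s"
    unfolding e using step.IH q(2) g[of s]
    by (auto intro!: grade_add grade_scale assms(1) simp: grade_zero[OF assms(1)])
  have b: "(\<Sum>s\<in>{-K..K}. pri (br h) K s (c *s x + y)) = c *s x + y"
    unfolding e using step.IH sx by (simp add: sum.distrib vec.scale_sum_right[symmetric])
  have d: "(\<forall>q\<in>A. q \<noteq> s) \<longrightarrow> pri (br h) K s (c *s x + y) = 0"
    unfolding e using step.IH q g[of s] by auto
  show ?case using a b d by blast
qed




lemma sums_smult: "X sums L \<Longrightarrow> (\<lambda>n. a *s X n) sums (a *s (L::complex^'n))"
  using bounded_linear.sums[OF vlin_bounded[of "\<lambda>v. a *s v"]]
  by (simp add: Vector_Spaces.linear_iff vec.vector_space_axioms vector_add_ldistrib vector_smult_assoc mult.commute)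

lemma powi_combine:
  fixes z :: complex
  assumes "z \<noteq> 0" "a + b = int n + int e"
  shows "z powi a * z powi b = z ^ n * z ^ e"
proof -
  have "z powi a * z powi b = z powi (a + b)" using assms(1) by (simp add: power_int_add)
  also have "\<dots> = z powi (int n) * z powi (int e)" unfolding assms(2) using assms(1) by (simp add: power_int_add)
  finally show ?thesis by simp
qed

lemma laurent_part:
  fixes c :: "nat \<Rightarrow> complex^'n" and k s :: int
  assumes "\<forall>n. int n - k < s \<longrightarrow> c n = 0"
    "\<forall>z. 0 < norm z \<and> norm z < r \<longrightarrow> (\<lambda>n. (z powi (int n - k)) *s c n) sums S z"
  shows "\<exists>m. vhol m (ball 0 r) \<and> (\<forall>z. 0 < norm z \<and> norm z < r \<longrightarrow> m z = (z powi (-s)) *s S z)"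
proof -
  define J where "J = nat (s + k)"
  define e where "e = nat (- (s + k))"
  define g where "g z = (inverse (z ^ e) * z powi (-s)) *s S z" for z :: complex
  have ps: "(\<lambda>n. (z ^ n) *s c (n + J)) sums g z" if "0 < norm z" "norm z < r" for z
  proof -
    have z0: "z \<noteq> 0" using that by auto
    have f: "(\<lambda>n. (z powi (int n - k)) *s c n) sums S z" using assms(2) that by blast
    have "(\<Sum>i<J. (z powi (int i - k)) *s c i) = 0"
      by (rule sum.neutral) (use assms(1) in \<open>auto simp: J_def\<close>)
    then have "(\<lambda>n. (z powi (int (n + J) - k)) *s c (n + J)) sums S z"
      using f sums_iff_shift[where f = "\<lambda>n. (z powi (int n - k)) *s c n" and n = J and s = "S z"] by simp
    then have "(\<lambda>n. (inverse (z ^ e) * z powi (-s)) *s ((z powi (int (n + J) - k)) *s c (n + J))) sums g z"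
      unfolding g_def by (rule sums_smult)
    moreover have "(inverse (z ^ e) * z powi (-s)) * z powi (int (n + J) - k) = z ^ n" for n
    proof -
      have "z powi (-s) * z powi (int (n + J) - k) = z ^ n * z ^ e"
        by (rule powi_combine[OF z0]) (simp add: J_def e_def)
      then show ?thesis using z0 by (simp add: mult.assoc)
    qed
    ultimately show ?thesis by (simp add: vector_smult_assoc)
  qed
  obtain G where G: "vhol G (ball 0 r)" "\<And>z. 0 < norm z \<Longrightarrow> norm z < r \<Longrightarrow> G z = g z"
    using powser_vhol[of r "\<lambda>n. c (n + J)" g] ps by blast
  define m where "m z = (z ^ e) *s G z" for z
  have "vhol m (ball 0 r)" unfolding m_def by (rule vhol_scale[OF _ G(1)]) (auto intro!: holomorphic_intros)
  moreover have "m z = (z powi (-s)) *s S z" if "0 < norm z" "norm z < r" for z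
    using that G(2)[OF that] by (simp add: m_def g_def vector_smult_assoc)
  ultimately show ?thesis by blast
qed

lemma grade_diff: assumes "x \<in> grade br h t" "y \<in> grade br h t" "lie_algebra br" shows "x - y \<in> grade br h t"
proof -
  have "br h (x - y) = br h x - br h y" by (rule vlin_diff[OF lie_lin2[OF assms(3)]])
  then show ?thesis using assms by (simp add: grade_def vector_ssub_ldistrib)
qed

lemma sum_single:
  assumes "finite A" "a \<in> A" "\<And>t. t \<in> A \<Longrightarrow> t \<noteq> a \<Longrightarrow> f t = 0"
  shows "sum f A = f a"
proof -
  have "sum f A = f a + sum f (A - {a})" using assms by (simp add: sum.remove)
  also have "sum f (A - {a}) = 0" using assms by (intro sum.neutral) auto
  finally show ?thesis by simp
qed




theorem theorem2p2:
  fixes br :: "complex^'n \<Rightarrow> complex^'n \<Rightarrow> complex^'n"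
    and B :: "complex^'n \<Rightarrow> complex^'n \<Rightarrow> complex"
    and H :: "(complex^'n) set" and h :: "complex^'n"
    and r :: real
    and L L' w :: "complex \<Rightarrow> complex^'n"
    and a b om :: "nat \<Rightarrow> complex^'n"
  assumes "semisimple_lie br"
    and "grading_element br H h"
    and "invariant_form br B"
    and "r > 0"
    and "\<forall>n. a n \<in> filtration br h (int n - grading_depth br h)"
    and "\<forall>n. b n \<in> filtration br h (int n - grading_depth br h)"
    and "\<forall>z. 0 < norm z \<and> norm z < r \<longrightarrow>
           (\<lambda>n. (z powi (int n - grading_depth br h)) *s a n) sums L z"
    and "\<forall>z. 0 < norm z \<and> norm z < r \<longrightarrow>
           (\<lambda>n. (z powi (int n - grading_depth br h)) *s b n) sums L' z"
    and "\<forall>l. om l \<in> grade br h 0"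
    and "\<forall>z. 0 < norm z \<and> norm z < r \<longrightarrow>
           (\<lambda>l. (z ^ l) *s om l) sums (w z - (1 / z) *s h)"
  shows "\<exists>f. f holomorphic_on ball 0 r \<and>
           (\<forall>z. 0 < norm z \<and> norm z < r \<longrightarrow>
              f z = B (L z) (vderiv L' z - br (w z) (L' z)))"
proof -
  have la: "lie_algebra br" using assms(1) by (simp add: semisimple_lie_def)
  have cb: "cbilinear B" using assms(3) by (simp add: invariant_form_def)
  have Bl1: "Vector_Spaces.linear (*s) (*) (\<lambda>x. B x y)" for y using cb by (simp add: cbilinear_def)
  have Bl2: "Vector_Spaces.linear (*s) (*) (\<lambda>y. B x y)" for x using cb by (simp add: cbilinear_def)
  define k where "k = grading_depth br h"
  have "\<exists>K. \<forall>t x. x \<in> grade br h t \<longrightarrow> x \<noteq> 0 \<longrightarrow> \<bar>t\<bar> \<le> K"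
  proof (rule eig_bound[OF la, of h])
    fix K :: int assume "0 \<le> K" "\<And>t x. x \<in> grade br h t \<Longrightarrow> x \<noteq> 0 \<Longrightarrow> \<bar>t\<bar> \<le> K"
    then show ?thesis by blast
  qed
  then obtain K where Kb: "\<And>t x. x \<in> grade br h t \<Longrightarrow> x \<noteq> 0 \<Longrightarrow> \<bar>t\<bar> \<le> K" by blast
  define Q where "Q = {-K..K}"
  have Qf: "finite Q" unfolding Q_def by simp
  have Qneg: "- s \<in> Q" if "s \<in> Q" for s using that unfolding Q_def by auto
  define P where "P s = pri (br h) K s" for s
  have Plin: "Vector_Spaces.linear (*s) (*s) (P s)" for s unfolding P_def by (rule pri_lin[OF lie_lin2[OF la]])
  have Pbl: "bounded_linear (P s)" for s using vlin_bounded[OF Plin] .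
  have Pspan: "P s v \<in> grade br h s \<and> (\<Sum>s\<in>Q. P s v) = v \<and> ((\<forall>q\<in>A. q \<noteq> s) \<longrightarrow> P s v = 0)"
    if "v \<in> vec.span (\<Union>q\<in>A. grade br h q)" for v s A
    unfolding P_def Q_def by (rule pri_span[OF la Kb that])
  define PD where "PD = ball (0::complex) r - {0}"
  have oPD: "open PD" unfolding PD_def by auto
  have inPD: "z \<in> PD \<longleftrightarrow> 0 < norm z \<and> norm z < r" for z unfolding PD_def by auto
  have PDsub: "PD \<subseteq> ball 0 r" unfolding PD_def by auto
  have vsub: "vhol f PD" if "vhol f (ball 0 r)" for f
    using that holomorphic_on_subset[OF _ PDsub] unfolding vhol_def by blast

  have comp: "\<exists>m. vhol m (ball 0 r) \<and> (\<forall>z\<in>PD. m z = (z powi (-s)) *s P s (S z) \<and> m z \<in> grade br h s)"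
    if cf: "\<forall>n. c n \<in> filtration br h (int n - k)"
      and cs: "\<forall>z. 0 < norm z \<and> norm z < r \<longrightarrow> (\<lambda>n. (z powi (int n - k)) *s c n) sums S z" for c S s
  proof -
    have cspan: "c n \<in> vec.span (\<Union>q\<in>{-k..int n - k}. grade br h q)" for n
      using cf by (simp add: filtration_def k_def)
    have h1: "\<forall>n. int n - k < s \<longrightarrow> P s (c n) = 0"
    proof (intro allI impI)
      fix n assume "int n - k < s"
      then have "\<forall>q\<in>{-k..int n - k}. q \<noteq> s" by auto
      then show "P s (c n) = 0" using Pspan[OF cspan[of n], of s] by blast
    qed
    have Psums: "(\<lambda>n. (z powi (int n - k)) *s P s (c n)) sums P s (S z)" if "0 < norm z" "norm z < r" for z
      using bounded_linear.sums[OF Pbl cs[rule_format, OF conjI[OF that]]] by (simp add: vlin_scale[OF Plin])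
    obtain m where m: "vhol m (ball 0 r)" "\<forall>z. 0 < norm z \<and> norm z < r \<longrightarrow> m z = (z powi (-s)) *s P s (S z)"
      using laurent_part[OF h1, of r "\<lambda>z. P s (S z)"] Psums by blast
    have "m z \<in> grade br h s" if "0 < norm z" "norm z < r" for z
    proof -
      have "P s (S z) \<in> grade br h s"
        by (rule sums_grade[OF la Psums[OF that]]) (use Pspan[OF cspan] in blast)
      then show ?thesis using m(2) that by (simp add: grade_scale[OF _ la])
    qed
    then show ?thesis using m inPD by blast
  qed

  have decomp: "(\<Sum>s\<in>Q. P s (S z)) = S z"
    if cf: "\<forall>n. c n \<in> filtration br h (int n - k)"
      and cs: "\<forall>z. 0 < norm z \<and> norm z < r \<longrightarrow> (\<lambda>n. (z powi (int n - k)) *s c n) sums S z"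
      and z: "z \<in> PD" for c S z
  proof -
    have cspan: "c n \<in> vec.span (\<Union>q\<in>{-k..int n - k}. grade br h q)" for n
      using cf by (simp add: filtration_def k_def)
    have cz: "(\<lambda>n. (z powi (int n - k)) *s c n) sums S z" using cs z inPD by blast
    have "(\<lambda>n. \<Sum>s\<in>Q. P s ((z powi (int n - k)) *s c n)) sums (\<Sum>s\<in>Q. P s (S z))"
      by (rule sums_sum) (rule bounded_linear.sums[OF Pbl cz])
    moreover have "(\<Sum>s\<in>Q. P s ((z powi (int n - k)) *s c n)) = (z powi (int n - k)) *s c n" for n
    proof -
      have "(\<Sum>s\<in>Q. P s ((z powi (int n - k)) *s c n)) = (\<Sum>s\<in>Q. (z powi (int n - k)) *s P s (c n))"
        by (simp add: vlin_scale[OF Plin])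
      also have "\<dots> = (z powi (int n - k)) *s (\<Sum>s\<in>Q. P s (c n))" by (simp add: vec.scale_sum_right)
      also have "\<dots> = (z powi (int n - k)) *s c n" using Pspan[OF cspan[of n]] by simp
      finally show ?thesis .
    qed
    ultimately have "(\<lambda>n. (z powi (int n - k)) *s c n) sums (\<Sum>s\<in>Q. P s (S z))" by simp
    then show ?thesis using cz by (simp add: sums_unique2)
  qed

  have a5: "\<forall>n. a n \<in> filtration br h (int n - k)" using assms(5) by (simp add: k_def)
  have b6: "\<forall>n. b n \<in> filtration br h (int n - k)" using assms(6) by (simp add: k_def)
  have a7: "\<forall>z. 0 < norm z \<and> norm z < r \<longrightarrow> (\<lambda>n. (z powi (int n - k)) *s a n) sums L z" using assms(7) by (simp add: k_def)
  have b8: "\<forall>z. 0 < norm z \<and> norm z < r \<longrightarrow> (\<lambda>n. (z powi (int n - k)) *s b n) sums L' z" using assms(8) by (simp add: k_def)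

  have "\<forall>s. \<exists>m. vhol m (ball 0 r) \<and> (\<forall>z\<in>PD. m z = (z powi (-s)) *s P s (L z) \<and> m z \<in> grade br h s)"
    using comp[OF a5 a7] by blast
  then obtain mL where mL: "\<And>s. vhol (mL s) (ball 0 r)"
    "\<And>s z. z \<in> PD \<Longrightarrow> mL s z = (z powi (-s)) *s P s (L z)" "\<And>s z. z \<in> PD \<Longrightarrow> mL s z \<in> grade br h s"
    by metis
  have "\<forall>s. \<exists>m. vhol m (ball 0 r) \<and> (\<forall>z\<in>PD. m z = (z powi (-s)) *s P s (L' z) \<and> m z \<in> grade br h s)"
    using comp[OF b6 b8] by blast
  then obtain mR where mR: "\<And>s. vhol (mR s) (ball 0 r)"
    "\<And>s z. z \<in> PD \<Longrightarrow> mR s z = (z powi (-s)) *s P s (L' z)" "\<And>s z. z \<in> PD \<Longrightarrow> mR s z \<in> grade br h s"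
    by metis
  obtain Om where Om: "vhol Om (ball 0 r)" "\<And>z. 0 < norm z \<Longrightarrow> norm z < r \<Longrightarrow> Om z = w z - (1 / z) *s h"
    using powser_vhol[OF assms(10)] by blast
  have OmG: "Om z \<in> grade br h 0" if "z \<in> PD" for z
  proof -
    have "(\<lambda>l. (z ^ l) *s om l) sums (w z - (1 / z) *s h)" using assms(10) that inPD by blast
    then have "w z - (1 / z) *s h \<in> grade br h 0" by (rule sums_grade[OF la]) (use assms(9) in blast)
    then show ?thesis using Om(2) that inPD by simp
  qed

  have rebuild: "(\<Sum>s\<in>Q. z powi s *s ((z powi (-s)) *s P s X)) = (\<Sum>s\<in>Q. P s X)" if "z \<in> PD" for z X
  proof -
    have "z \<noteq> 0" using that inPD by auto
    then have "z powi s * z powi (-s) = 1" for s by (simp add: power_int_minus)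
    then show ?thesis by (simp add: vector_smult_assoc)
  qed
  have LD: "L z = (\<Sum>s\<in>Q. z powi s *s mL s z)" if "z \<in> PD" for z
    using rebuild[OF that, of "L z"] decomp[OF a5 a7 that] mL(2)[OF that] by simp
  have L'D: "L' z = (\<Sum>s\<in>Q. z powi s *s mR s z)" if "z \<in> PD" for z
    using rebuild[OF that, of "L' z"] decomp[OF b6 b8 that] mR(2)[OF that] by simp

  have mRderG: "vderiv (mR t) z \<in> grade br h t" if z: "z \<in> PD" for t z
  proof -
    have sl: "Vector_Spaces.linear (*s) (*s) (\<lambda>v. (of_int t :: complex) *s v)"
      by (simp add: Vector_Spaces.linear_iff vec.vector_space_axioms vector_add_ldistrib vector_smult_assoc mult.commute)
    have "vderiv (\<lambda>u. br h (mR t u)) z = vderiv (\<lambda>u. of_int t *s mR t u) z"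
      by (rule vderiv_cong[OF oPD z]) (use mR(3) in \<open>simp add: grade_def\<close>)
    moreover have "vderiv (\<lambda>u. br h (mR t u)) z = br h (vderiv (mR t) z)"
      by (rule vderiv_lin[OF lie_lin2[OF la] vsub[OF mR(1)] oPD z])
    moreover have "vderiv (\<lambda>u. of_int t *s mR t u) z = of_int t *s vderiv (mR t) z"
      by (rule vderiv_lin[OF sl vsub[OF mR(1)] oPD z])
    ultimately show ?thesis by (simp add: grade_def)
  qed

  define Y where "Y t z = vderiv (mR t) z - br (Om z) (mR t z)" for t z
  have YG: "Y t z \<in> grade br h t" if "z \<in> PD" for t z
    unfolding Y_def by (rule grade_diff[OF mRderG[OF that] grade_br0[OF la OmG[OF that] mR(3)[OF that]] la])

  have key: "vderiv L' z - br (w z) (L' z) = (\<Sum>t\<in>Q. z powi t *s Y t z)" if z: "z \<in> PD" for z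
  proof -
    have z0: "z \<noteq> 0" using z inPD by auto
    have hp: "vhol (\<lambda>u. u powi t *s mR t u) PD" for t
      by (rule vhol_scale[OF _ vsub[OF mR(1)]]) (auto intro!: holomorphic_intros simp: PD_def)
    have "vderiv L' z = vderiv (\<lambda>u. \<Sum>t\<in>Q. u powi t *s mR t u) z"
      by (rule vderiv_cong[OF oPD z]) (rule L'D)
    also have "\<dots> = (\<Sum>t\<in>Q. vderiv (\<lambda>u. u powi t *s mR t u) z)"
      by (rule vderiv_sum[OF hp oPD z])
    also have "\<dots> = (\<Sum>t\<in>Q. (of_int t * z powi (t - 1)) *s mR t z + z powi t *s vderiv (mR t) z)"
    proof (rule sum.cong[OF refl])
      fix t
      have d: "((\<lambda>u. u powi t) has_field_derivative (of_int t * z powi (t - 1) * 1)) (at z)"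
        by (rule DERIV_power_int[OF DERIV_ident]) (use z0 in simp)
      show "vderiv (\<lambda>u. u powi t *s mR t u) z = (of_int t * z powi (t - 1)) *s mR t z + z powi t *s vderiv (mR t) z"
        using vderiv_scale[OF vsub[OF mR(1)] oPD z d] by simp
    qed
    finally have dL: "vderiv L' z = (\<Sum>t\<in>Q. (of_int t * z powi (t - 1)) *s mR t z + z powi t *s vderiv (mR t) z)" .
    have wz: "w z = (1 / z) *s h + Om z" using Om(2) z inPD by auto
    have brt: "br (w z) (z powi t *s mR t z) = z powi t *s ((1 / z) *s (of_int t *s mR t z) + br (Om z) (mR t z))" for t
    proof -
      have "br (w z) (z powi t *s mR t z) = z powi t *s br (w z) (mR t z)"
        by (rule vlin_scale[OF lie_lin2[OF la]])
      also have "br (w z) (mR t z) = br ((1 / z) *s h) (mR t z) + br (Om z) (mR t z)"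
        unfolding wz by (rule vlin_add[OF lie_lin1[OF la]])
      also have "br ((1 / z) *s h) (mR t z) = (1 / z) *s br h (mR t z)"
        by (rule vlin_scale[OF lie_lin1[OF la]])
      also have "br h (mR t z) = of_int t *s mR t z" using mR(3)[OF z] by (simp add: grade_def)
      finally show ?thesis .
    qed
    have brL: "br (w z) (L' z) = (\<Sum>t\<in>Q. br (w z) (z powi t *s mR t z))"
      unfolding L'D[OF z] by (rule vlin_sum[OF lie_lin2[OF la]])
    have pt: "(of_int t * z powi (t - 1)) *s mR t z + z powi t *s vderiv (mR t) z - br (w z) (z powi t *s mR t z)
              = z powi t *s Y t z" for t
    proof -
      have e: "z powi (t - 1) = z powi t * inverse z" using z0 by (simp add: power_int_diff divide_inverse)
      show ?thesis unfolding brt Y_def e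
        by (simp add: vec_eq_iff algebra_simps divide_inverse vlin_diff[OF lie_lin1[OF la]])
    qed
    show ?thesis unfolding dL brL by (simp add: sum_subtractf[symmetric] pt)
  qed

  define F0 where "F0 z = (\<Sum>s\<in>Q. B (mL s z) (vderiv (mR (- s)) z - br (Om z) (mR (- s) z)))" for z
  have ll1: "\<forall>y. Vector_Spaces.linear (*s) (*s) (\<lambda>x. br x y)" using la by (simp add: lie_algebra_def)
  have ll2: "\<forall>x. Vector_Spaces.linear (*s) (*s) (\<lambda>y. br x y)" using la by (simp add: lie_algebra_def)
  have F0hol: "F0 holomorphic_on ball 0 r"
    unfolding F0_def
  proof (rule holomorphic_on_sum)
    fix s assume "s \<in> Q"
    have v1: "vhol (\<lambda>z. vderiv (mR (-s)) z - br (Om z) (mR (-s) z)) (ball 0 r)"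
      by (rule vhol_diff[OF vhol_vderiv[OF _ mR(1)] vhol_bil[OF ll1 ll2 Om(1) mR(1)]]) simp
    show "(\<lambda>z. B (mL s z) (vderiv (mR (- s)) z - br (Om z) (mR (- s) z))) holomorphic_on ball 0 r"
      by (rule hol_cbilinear[OF cb mL(1) v1])
  qed
  have "F0 z = B (L z) (vderiv L' z - br (w z) (L' z))" if "0 < norm z" "norm z < r" for z
  proof -
    have z: "z \<in> PD" using that inPD by auto
    have z0: "z \<noteq> 0" using that by auto
    have "B (L z) (vderiv L' z - br (w z) (L' z)) = B (L z) (\<Sum>t\<in>Q. z powi t *s Y t z)" using key[OF z] by simp
    also have "\<dots> = (\<Sum>t\<in>Q. z powi t * B (L z) (Y t z))"
      by (simp add: vlin_sum[OF Bl2] vlin_scale[OF Bl2])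
    also have "\<dots> = (\<Sum>t\<in>Q. z powi t * (\<Sum>s\<in>Q. z powi s * B (mL s z) (Y t z)))"
      unfolding LD[OF z] by (simp add: vlin_sum[OF Bl1] vlin_scale[OF Bl1])
    also have "\<dots> = (\<Sum>t\<in>Q. \<Sum>s\<in>Q. z powi t * (z powi s * B (mL s z) (Y t z)))"
      by (simp add: sum_distrib_left)
    also have "\<dots> = (\<Sum>s\<in>Q. \<Sum>t\<in>Q. z powi t * (z powi s * B (mL s z) (Y t z)))"
      by (rule sum.swap)
    also have "\<dots> = (\<Sum>s\<in>Q. z powi (- s) * (z powi s * B (mL s z) (Y (- s) z)))"
    proof (rule sum.cong[OF refl])
      fix s assume s: "s \<in> Q"
      show "(\<Sum>t\<in>Q. z powi t * (z powi s * B (mL s z) (Y t z))) = z powi (- s) * (z powi s * B (mL s z) (Y (- s) z))"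
      proof (rule sum_single[OF Qf Qneg[OF s]])
        fix t assume "t \<in> Q" "t \<noteq> - s"
        then have "B (mL s z) (Y t z) = 0"
          by (intro grade_orth[OF la assms(3) mL(3)[OF z] YG[OF z]]) auto
        then show "z powi t * (z powi s * B (mL s z) (Y t z)) = 0" by simp
      qed
    qed
    also have "\<dots> = F0 z" unfolding F0_def Y_def
    proof (rule sum.cong[OF refl])
      fix s
      have nz: "z powi s \<noteq> 0" using z0 by simp
      show "z powi (- s) * (z powi s * B (mL s z) (vderiv (mR (- s)) z - br (Om z) (mR (- s) z)))
            = B (mL s z) (vderiv (mR (- s)) z - br (Om z) (mR (- s) z))"
        using nz by (simp add: power_int_minus mult.assoc[symmetric])
    qed
    finally show ?thesis by simp
  qed
  then show ?thesis using F0hol by blast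
qed


end
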